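(* Let $A$ be a commutative ring. Then $\mathrm{GL}_2(A)$ acts transitively on the set of ordered $3$-cliques of $\Gamma(A)$, and the stabilizer of the ordered $3$-clique $(\infty,0,1)$ is the group of scalar matrices in $\mathrm{GL}_2(A)$.
   Context: A unimodular row over $A$ is $(a,b)\in A^2$ with $aA+bA=A$. $\Gamma(A)$ is the graph whose vertices are classes $[u]$ of unimodular rows modulo multiplication by units, with $\{[u],[v]\}$ an edge iff the matrix with rows $u,v$ lies in $\mathrm{GL}_2(A)$. An ordered $3$-clique is a triple of pairwise adjacent vertices. $\mathrm{GL}_2(A)$ acts on vertices on the right by $[u]\cdot M=[uM]$. $\infty=[(1,0)]$, $0=[(0,1)]$, $1=[(1,1)]$. *)

theory Defs
  imports Main
begin

type_synonym 'a row = "'a \<times> 'a"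
type_synonym 'a mat2 = "'a row \<times> 'a row"

definition is_unit :: "'a::comm_ring_1 \<Rightarrow> bool" where
  "is_unit c \<longleftrightarrow> c dvd 1"

definition unimodular :: "'a::comm_ring_1 row \<Rightarrow> bool" where
  "unimodular u \<longleftrightarrow> (\<exists>x y. fst u * x + snd u * y = 1)"

definition det2 :: "'a::comm_ring_1 mat2 \<Rightarrow> 'a" where
  "det2 M = fst (fst M) * snd (snd M) - snd (fst M) * fst (snd M)"

definition GL2 :: "'a::comm_ring_1 mat2 set" where
  "GL2 = {M. is_unit (det2 M)}"

definition row_mult :: "'a::comm_ring_1 row \<Rightarrow> 'a mat2 \<Rightarrow> 'a row" where
  "row_mult u M = (fst u * fst (fst M) + snd u * fst (snd M),
                   fst u * snd (fst M) + snd u * snd (snd M))"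

definition cls :: "'a::comm_ring_1 row \<Rightarrow> 'a row set" where
  "cls u = {(c * fst u, c * snd u) | c. is_unit c}"

definition vertices :: "'a::comm_ring_1 row set set" where
  "vertices = {cls u | u. unimodular u}"

definition adj :: "'a::comm_ring_1 row set \<Rightarrow> 'a row set \<Rightarrow> bool" where
  "adj X Y \<longleftrightarrow> (\<exists>u v. unimodular u \<and> unimodular v \<and> X = cls u \<and> Y = cls v \<and> (u, v) \<in> GL2)"

definition cliques3 :: "('a::comm_ring_1 row set \<times> 'a row set \<times> 'a row set) set" where
  "cliques3 = {(X, Y, Z). X \<in> vertices \<and> Y \<in> vertices \<and> Z \<in> vertices \<and>
                           adj X Y \<and> adj Y Z \<and> adj X Z}"

definition vact :: "'a::comm_ring_1 row set \<Rightarrow> 'a mat2 \<Rightarrow> 'a row set" where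
  "vact X M = (\<lambda>u. row_mult u M) ` X"

definition cact :: "('a::comm_ring_1 row set \<times> 'a row set \<times> 'a row set) \<Rightarrow> 'a mat2
                    \<Rightarrow> ('a row set \<times> 'a row set \<times> 'a row set)" where
  "cact T M = (case T of (X, Y, Z) \<Rightarrow> (vact X M, vact Y M, vact Z M))"

definition v_inf :: "'a::comm_ring_1 row set" where "v_inf = cls (1, 0)"
definition v_zero :: "'a::comm_ring_1 row set" where "v_zero = cls (0, 1)"
definition v_one :: "'a::comm_ring_1 row set" where "v_one = cls (1, 1)"

definition scalar_mats :: "'a::comm_ring_1 mat2 set" where
  "scalar_mats = {((c, 0), (0, c)) | c. is_unit c}"

end

theory Submission
  imports Defs
begin

lemma iu: "Defs.is_unit c \<longleftrightarrow> c dvd (1::'a::comm_ring_1)"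
  by (simp add: Defs.is_unit_def)

definition mmul :: "'a::comm_ring_1 mat2 \<Rightarrow> 'a mat2 \<Rightarrow> 'a mat2" where
  "mmul M N = (row_mult (fst M) N, row_mult (snd M) N)"

lemma row_mult_assoc: "row_mult (row_mult u M) N = row_mult u (mmul M N)"
  by (cases u; cases M; cases N) (auto simp: row_mult_def mmul_def algebra_simps)

lemma vact_vact: "vact (vact X M) N = vact X (mmul M N)"
  unfolding vact_def image_image row_mult_assoc ..

lemma cact_cact: "cact (cact T M) N = cact T (mmul M N)"
  by (cases T) (auto simp: cact_def vact_vact)

lemma cact_id: "cact T ((1,0),(0,1)) = T"
proof -
  have "row_mult u ((1,0),(0,1)) = u" for u :: "'a row"
    by (cases u) (simp add: row_mult_def)
  then have "vact X ((1,0),(0,1)) = X" for X :: "'a row set"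
    by (simp add: vact_def)
  then show ?thesis by (cases T) (simp add: cact_def)
qed

lemma det_mmul: "det2 (mmul M N) = det2 M * det2 N"
  by (cases M; cases N) (auto simp: det2_def mmul_def row_mult_def algebra_simps)

lemma GL2_mmul: "M \<in> GL2 \<Longrightarrow> N \<in> GL2 \<Longrightarrow> mmul M N \<in> GL2"
  by (auto simp: GL2_def iu det_mmul) (metis mult_dvd_mono mult_1_right)

lemma GL2_inv:
  assumes "(M::'a::comm_ring_1 mat2) \<in> GL2"
  shows "\<exists>N\<in>GL2. mmul M N = ((1,0),(0,1))"
proof -
  obtain a b c d where M: "M = ((a,b),(c,d))" by (metis prod.collapse)
  from assms obtain e where e: "(a*d - b*c) * e = 1"
    by (auto simp: GL2_def iu M det2_def elim!: dvdE)
  let ?N = "((d*e, -b*e),(-c*e, a*e))"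
  have "det2 ?N = e * ((a*d - b*c) * e)" by (simp add: det2_def algebra_simps)
  then have "?N \<in> GL2" using e by (simp add: GL2_def iu) (metis dvd_triv_right)
  moreover have "mmul M ?N = ((1,0),(0,1))"
  proof -
    have "a*(d*e) + b*(-c*e) = (a*d - b*c) * e" by (simp add: algebra_simps)
    moreover have "c*(-b*e) + d*(a*e) = (a*d - b*c) * e" by (simp add: algebra_simps)
    moreover have "a*(-b*e) + b*(a*e) = 0" by (simp add: algebra_simps)
    moreover have "c*(d*e) + d*(-c*e) = 0" by (simp add: algebra_simps)
    ultimately show ?thesis using e by (simp add: M mmul_def row_mult_def)
  qed
  ultimately show ?thesis by blast
qed

lemma cls_img: "cls u = (\<lambda>c. (c * fst u, c * snd u)) ` Collect Defs.is_unit"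
  by (auto simp: cls_def)

lemma rm_scale: "row_mult (c * fst u, c * snd u) M = (c * fst (row_mult u M), c * snd (row_mult u M))"
  by (simp add: row_mult_def algebra_simps)

lemma vact_cls: "vact (cls u) M = cls (row_mult u M)"
  unfolding vact_def cls_img image_image rm_scale ..

lemma self_cls: "u \<in> cls u"
  unfolding cls_def by (cases u) (auto simp: iu intro!: exI[of _ 1])

lemma cls_scale: "c dvd 1 \<Longrightarrow> cls (c * fst u, c * snd u) = cls u"
proof -
  assume c: "c dvd 1"
  then obtain d where d: "1 = c * d" by (auto elim: dvdE)
  show ?thesis
  proof
    show "cls (c * fst u, c * snd u) \<subseteq> cls u"
    proof
      fix x assume "x \<in> cls (c * fst u, c * snd u)"
      then obtain k where k: "k dvd 1" "x = (k * (c * fst u), k * (c * snd u))" by (auto simp: cls_def iu)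
      have "(k*c) dvd 1" using k c by (metis mult_dvd_mono mult_1_right)
      moreover have "x = ((k*c) * fst u, (k*c) * snd u)" using k by (simp add: mult.assoc)
      ultimately show "x \<in> cls u" by (auto simp: cls_def iu)
    qed
  next
    show "cls u \<subseteq> cls (c * fst u, c * snd u)"
    proof
      fix x assume "x \<in> cls u"
      then obtain k where k: "k dvd 1" "x = (k * fst u, k * snd u)" by (auto simp: cls_def iu)
      have kd: "(k*d) * (c * y) = k * y" for y
      proof -
        have "(k*d) * (c * y) = k * (c * d) * y" by (simp add: algebra_simps)
        then show ?thesis using d by simp
      qed
      have "x = ((k*d) * (c * fst u), (k*d) * (c * snd u))"
        using k kd by simp
      moreover have "d dvd 1" using d by (metis dvd_triv_right)
      then have "(k*d) dvd 1" using k by (metis mult_dvd_mono mult_1_right)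
      ultimately show "x \<in> cls (c * fst u, c * snd u)" by (auto simp: cls_def iu)
    qed
  qed
qed

lemma cls_eq: "cls u = cls v \<Longrightarrow> \<exists>c. c dvd 1 \<and> v = (c * fst u, c * snd u)"
  using self_cls[of v] by (auto simp: cls_def iu)


lemma unit_mult: "a dvd 1 \<Longrightarrow> b dvd (1::'a::comm_ring_1) \<Longrightarrow> a*b dvd 1"
  by (metis mult_dvd_mono mult_1_right)

lemma adj_rep:
  assumes "adj (cls u) (cls v)"
  shows "det2 (u, v) dvd 1"
proof -
  from assms obtain u' v' where h: "cls u = cls u'" "cls v = cls v'" "det2 (u', v') dvd 1"
    by (auto simp: adj_def GL2_def iu)
  obtain c where c: "c dvd 1" "u = (c * fst u', c * snd u')" using cls_eq[OF h(1)[symmetric]] by blast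
  obtain d where d: "d dvd 1" "v = (d * fst v', d * snd v')" using cls_eq[OF h(2)[symmetric]] by blast
  have "det2 (u, v) = (c * d) * det2 (u', v')"
    by (simp add: c(2) d(2) det2_def algebra_simps)
  then show ?thesis using c(1) d(1) h(3) by (metis mult_dvd_mono mult_1_right)
qed

lemma clique_std:
  assumes "(X, Y, Z) \<in> (cliques3 :: ('a::comm_ring_1 row set \<times> 'a row set \<times> 'a row set) set)"
  shows "\<exists>M\<in>GL2. cact (v_inf, v_zero, v_one) M = (X, Y, Z)"
proof -
  from assms obtain u v w :: "'a row" where X: "X = cls u" and Y: "Y = cls v" and Z: "Z = cls w"
    and a1: "adj X Y" and a2: "adj Y Z" and a3: "adj X Z"
    by (auto simp: cliques3_def vertices_def)
  have duv: "det2 (u, v) dvd 1" using adj_rep a1 X Y by blast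
  have dvw: "det2 (v, w) dvd 1" using adj_rep a2 Y Z by blast
  have duw: "det2 (u, w) dvd 1" using adj_rep a3 X Z by blast
  obtain e where e: "det2 (u, v) * e = 1" using duv by (auto elim!: dvdE)
  have eu: "e dvd 1" using e by (metis dvd_triv_right)
  obtain u1 u2 where u: "u = (u1, u2)" by fastforce
  obtain v1 v2 where v: "v = (v1, v2)" by fastforce
  obtain w1 w2 where w: "w = (w1, w2)" by fastforce
  define \<alpha> where "\<alpha> = - det2 (v, w) * e"
  define \<beta> where "\<beta> = det2 (u, w) * e"
  have "- det2 (v, w) dvd 1" using dvw by simp
  then have au: "\<alpha> dvd 1" unfolding \<alpha>_def using eu by (rule unit_mult)
  have bu: "\<beta> dvd 1" unfolding \<beta>_def using duw eu by (rule unit_mult)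
  define M where "M = ((\<alpha> * u1, \<alpha> * u2), (\<beta> * v1, \<beta> * v2))"
  have dM: "det2 M = (\<alpha> * \<beta>) * det2 (u, v)" by (simp add: M_def det2_def u v algebra_simps)
  have "(\<alpha> * \<beta>) * det2 (u, v) dvd 1" using au bu duv by (intro unit_mult)
  then have MG: "M \<in> GL2" using dM by (simp add: GL2_def iu)
  have r1: "row_mult (1, 0) M = (\<alpha> * fst u, \<alpha> * snd u)" by (simp add: M_def row_mult_def u)
  have r2: "row_mult (0, 1) M = (\<beta> * fst v, \<beta> * snd v)" by (simp add: M_def row_mult_def v)
  have w1: "\<alpha> * u1 + \<beta> * v1 = w1 * (det2 (u, v) * e)"
    by (simp add: \<alpha>_def \<beta>_def u v w det2_def algebra_simps)
  have w2: "\<alpha> * u2 + \<beta> * v2 = w2 * (det2 (u, v) * e)"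
    by (simp add: \<alpha>_def \<beta>_def u v w det2_def algebra_simps)
  have r3: "row_mult (1, 1) M = w" using w1 w2 e by (simp add: M_def row_mult_def w)
  have "cact (v_inf, v_zero, v_one) M = (X, Y, Z)"
    by (simp add: cact_def v_inf_def v_zero_def v_one_def vact_cls r1 r2 r3 cls_scale au bu X Y Z)
  with MG show ?thesis by blast
qed

lemma stab:
  "{M \<in> (GL2 :: 'a::comm_ring_1 mat2 set). cact (v_inf, v_zero, v_one) M = (v_inf, v_zero, v_one)}
    = scalar_mats"
proof
  show "{M \<in> (GL2 :: 'a mat2 set). cact (v_inf, v_zero, v_one) M = (v_inf, v_zero, v_one)} \<subseteq> scalar_mats"
  proof clarify
    fix M :: "'a mat2"
    assume G: "M \<in> GL2" and C: "cact (v_inf, v_zero, v_one) M = (v_inf, v_zero, v_one)"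
    obtain a b c d where M: "M = ((a,b),(c,d))" by (metis prod.collapse)
    from C have "cls (row_mult (1,0) M) = cls (1,0)" "cls (row_mult (0,1) M) = cls (0,1)"
       "cls (row_mult (1,1) M) = cls (1,1)"
      by (simp_all add: cact_def v_inf_def v_zero_def v_one_def vact_cls)
    then have h: "cls (a,b) = cls (1,0)" "cls (c,d) = cls (0,1)" "cls (a+c, b+d) = cls (1,1)"
      by (simp_all add: M row_mult_def)
    from cls_eq[OF h(1)[symmetric]] have b: "b = 0" by auto
    from cls_eq[OF h(2)[symmetric]] have c: "c = 0" by auto
    from cls_eq[OF h(3)[symmetric]] have ad: "a = d" using b c by auto
    from G have "a * a dvd 1" by (simp add: GL2_def iu M det2_def b c ad)
    then have "a dvd 1" by (metis dvd_mult_left)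
    then show "M \<in> scalar_mats" by (auto simp: scalar_mats_def iu M b c ad)
  qed
next
  show "scalar_mats \<subseteq> {M \<in> (GL2 :: 'a mat2 set). cact (v_inf, v_zero, v_one) M = (v_inf, v_zero, v_one)}"
  proof
    fix M :: "'a mat2" assume "M \<in> scalar_mats"
    then obtain a where a: "a dvd 1" "M = ((a,0),(0,a))" by (auto simp: scalar_mats_def iu)
    have "M \<in> GL2" using a by (simp add: GL2_def iu det2_def) (metis mult_dvd_mono mult_1_right)
    moreover have "cact (v_inf, v_zero, v_one) M = (v_inf, v_zero, v_one)"
    proof -
      have "cls (row_mult (1,0) M) = cls (1,0)" using cls_scale[OF a(1), of "(1,0)"]
        by (simp add: a(2) row_mult_def)
      moreover have "cls (row_mult (0,1) M) = cls (0,1)" using cls_scale[OF a(1), of "(0,1)"]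
        by (simp add: a(2) row_mult_def)
      moreover have "cls (row_mult (1,1) M) = cls (1,1)" using cls_scale[OF a(1), of "(1,1)"]
        by (simp add: a(2) row_mult_def)
      ultimately show ?thesis by (simp add: cact_def v_inf_def v_zero_def v_one_def vact_cls)
    qed
    ultimately show "M \<in> {M \<in> GL2. cact (v_inf, v_zero, v_one) M = (v_inf, v_zero, v_one)}" by blast
  qed
qed

theorem lemma2p7:
  shows "(\<forall>T \<in> (cliques3 :: ('a::comm_ring_1 row set \<times> 'a row set \<times> 'a row set) set).
            \<forall>T' \<in> cliques3. \<exists>M \<in> GL2. cact T M = T')
         \<and> {M \<in> (GL2 :: 'a mat2 set). cact (v_inf, v_zero, v_one) M = (v_inf, v_zero, v_one)}
             = scalar_mats"
proof (intro conjI ballI stab)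
  fix T T' :: "'a row set \<times> 'a row set \<times> 'a row set"
  assume T: "T \<in> cliques3" and T': "T' \<in> cliques3"
  obtain M where M: "M \<in> GL2" "cact (v_inf, v_zero, v_one) M = T"
    using clique_std T by (cases T) blast
  obtain M' where M': "M' \<in> GL2" "cact (v_inf, v_zero, v_one) M' = T'"
    using clique_std T' by (cases T') blast
  obtain N where N: "N \<in> GL2" "mmul M N = ((1,0),(0,1))" using GL2_inv M(1) by blast
  have "cact T (mmul N M') = T'"
    using M(2) M'(2)
    by (metis N(2) cact_cact cact_id)
  moreover have "mmul N M' \<in> GL2" using GL2_mmul N(1) M'(1) by blast
  ultimately show "\<exists>M\<in>GL2. cact T M = T'" by blast
qed
end
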